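(* Fix $x$ and integers $K\ge 0$, $L\ge 1$. Let $p(x\mid z)$ be a likelihood, $p(z,\zeta)$ a joint density with $p(z)=\int p(z,\zeta)\,d\zeta$, $p(x,z)=p(x\mid z)p(z)$ and $p(x)=\int p(x,z)\,dz$. Let $q(z,\psi\mid x)=q(\psi\mid x)\,q(z\mid\psi,x)$ be a joint density with marginal $q(z\mid x)=\int q(z,\psi\mid x)\,d\psi$. Let $\tau(\psi\mid z,x)$ be a conditional density in $\psi$ such that $\tau(\psi\mid z,x)=0$ implies $q(z,\psi\mid x)=0$, and $\rho(\zeta\mid z)$ a conditional density in $\zeta$. Then $$\log p(x)\ge\mathbb{E}_{q(z\mid x)}\log\frac{p(x,z)}{q(z\mid x)}\ge\mathbb{E}_{q(z,\psi_0\mid x)}\,\mathbb{E}_{\tau(\psi_{1:K}\mid z,x)}\,\mathbb{E}_{\rho(\zeta_{1:L}\mid z)}\log\frac{p(x\mid z)\,\frac{1}{L}\sum_{l=1}^L\frac{p(z,\zeta_l)}{\rho(\zeta_l\mid z)}}{\frac{1}{K+1}\sum_{k=0}^K\frac{q(z,\psi_k\mid x)}{\tau(\psi_k\mid z,x)}},$$ where $(z,\psi_0)\sim q(z,\psi\mid x)$, and given $z$, $\psi_1,\dots,\psi_K$ are i.i.d. from $\tau(\cdot\mid z,x)$ and $\zeta_1,\dots,\zeta_L$ are i.i.d. from $\rho(\cdot\mid z)$.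
   Context: All densities are with respect to fixed base measures; $\log$ is the natural logarithm. *)

theory Defs
  imports "HOL-Probability.Probability"
begin

text \<open>The observation x is fixed throughout, so it is suppressed from all densities.
  Base measures: Mz for z, Mpsi for psi, Mzeta for zeta.
  lik z = p(x|z); pj z zeta = p(z,zeta); q z psi = q(z,psi|x);
  tau z psi = tau(psi|z,x); rho z zeta = rho(zeta|z).\<close>

definition marg :: "'a measure \<Rightarrow> ('z \<Rightarrow> 'a \<Rightarrow> real) \<Rightarrow> 'z \<Rightarrow> real" where
  "marg M f z = enn2real (\<integral>\<^sup>+ a. ennreal (f z a) \<partial>M)"

definition evidence :: "'z measure \<Rightarrow> 'c measure \<Rightarrow> ('z \<Rightarrow> real) \<Rightarrow> ('z \<Rightarrow> 'c \<Rightarrow> real) \<Rightarrow> ennreal" where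
  "evidence Mz Mzeta lik pj = (\<integral>\<^sup>+ z. ennreal (lik z * marg Mzeta pj z) \<partial>Mz)"

definition qz_measure :: "'z measure \<Rightarrow> 'b measure \<Rightarrow> ('z \<Rightarrow> 'b \<Rightarrow> real) \<Rightarrow> 'z measure" where
  "qz_measure Mz Mpsi q = density Mz (\<lambda>z. ennreal (marg Mpsi q z))"

definition elbo_integrand :: "'b measure \<Rightarrow> 'c measure \<Rightarrow> ('z \<Rightarrow> real) \<Rightarrow> ('z \<Rightarrow> 'c \<Rightarrow> real)
     \<Rightarrow> ('z \<Rightarrow> 'b \<Rightarrow> real) \<Rightarrow> 'z \<Rightarrow> real" where
  "elbo_integrand Mpsi Mzeta lik pj q z = ln (lik z * marg Mzeta pj z / marg Mpsi q z)"

definition joint_measure :: "'z measure \<Rightarrow> 'b measure \<Rightarrow> 'c measure \<Rightarrow> nat \<Rightarrow> nat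
     \<Rightarrow> ('z \<Rightarrow> 'b \<Rightarrow> real) \<Rightarrow> ('z \<Rightarrow> 'b \<Rightarrow> real) \<Rightarrow> ('z \<Rightarrow> 'c \<Rightarrow> real)
     \<Rightarrow> (('z \<times> 'b) \<times> ((nat \<Rightarrow> 'b) \<times> (nat \<Rightarrow> 'c))) measure" where
  "joint_measure Mz Mpsi Mzeta K L q tau rho =
     density ((Mz \<Otimes>\<^sub>M Mpsi) \<Otimes>\<^sub>M (PiM {1..K} (\<lambda>_. Mpsi) \<Otimes>\<^sub>M PiM {1..L} (\<lambda>_. Mzeta)))
       (\<lambda>((z, psi0), (psis, zetas)).
          ennreal (q z psi0 * (\<Prod>k\<in>{1..K}. tau z (psis k)) * (\<Prod>l\<in>{1..L}. rho z (zetas l))))"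

definition diw_ratio :: "nat \<Rightarrow> nat \<Rightarrow> ('z \<Rightarrow> real) \<Rightarrow> ('z \<Rightarrow> 'c \<Rightarrow> real)
     \<Rightarrow> ('z \<Rightarrow> 'b \<Rightarrow> real) \<Rightarrow> ('z \<Rightarrow> 'b \<Rightarrow> real) \<Rightarrow> ('z \<Rightarrow> 'c \<Rightarrow> real)
     \<Rightarrow> ('z \<times> 'b) \<times> ((nat \<Rightarrow> 'b) \<times> (nat \<Rightarrow> 'c)) \<Rightarrow> real" where
  "diw_ratio K L lik pj q tau rho w =
     (case w of ((z, psi0), (psis, zetas)) \<Rightarrow>
       (lik z * ((1 / real L) * (\<Sum>l\<in>{1..L}. pj z (zetas l) / rho z (zetas l))))
       / ((1 / real (K + 1)) * (q z psi0 / tau z psi0 + (\<Sum>k\<in>{1..K}. q z (psis k) / tau z (psis k)))))"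

definition diw_integrand where
  "diw_integrand K L lik pj q tau rho w = ln (diw_ratio K L lik pj q tau rho w)"

end

theory Submission
  imports Defs
begin


lemma PiM_swap_nn:
  fixes N :: "'a measure" and f :: "(nat \<Rightarrow> 'a) \<Rightarrow> ennreal"
  assumes sf: "sigma_finite_measure N" and I: "finite I" "i \<in> I" "j \<in> I" "i \<noteq> j"
    and f[measurable]: "f \<in> borel_measurable (PiM I (\<lambda>_. N))"
  shows "(\<integral>\<^sup>+ x. f (x(i := x j, j := x i)) \<partial>PiM I (\<lambda>_. N)) = integral\<^sup>N (PiM I (\<lambda>_. N)) f"
proof -
  interpret product_sigma_finite "\<lambda>_. N" using sf by (simp add: product_sigma_finite_def)
  interpret P: pair_sigma_finite N N using sf by (simp add: pair_sigma_finite_def)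
  define J where "J = I - {i, j}"
  have IJ: "I = insert i (insert j J)" "i \<notin> insert j J" "j \<notin> J" "finite J" "finite (insert j J)"
    using I by (auto simp: J_def)
  have upd: "(\<lambda>(a, b). x(j := a, i := b)) \<in> N \<Otimes>\<^sub>M N \<rightarrow>\<^sub>M PiM I (\<lambda>_. N)" if x: "x \<in> space (PiM J (\<lambda>_. N))" for x
  proof -
    have "(\<lambda>(a, b). x(j := a, i := b)) = (\<lambda>p. \<lambda>k\<in>I. if k = i then snd p else if k = j then fst p else x k)"
      using x I by (auto simp: fun_eq_iff space_PiM PiE_def extensional_def J_def)
    also have "\<dots> \<in> N \<Otimes>\<^sub>M N \<rightarrow>\<^sub>M PiM I (\<lambda>_. N)"
      apply (intro measurable_restrict)
      subgoal for k using x by (cases "k = i"; cases "k = j") (auto simp: space_PiM J_def PiE_def Pi_def)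
      done
    finally show ?thesis .
  qed
  have sw: "(\<lambda>x. x(i := x j, j := x i)) \<in> PiM I (\<lambda>_. N) \<rightarrow>\<^sub>M PiM I (\<lambda>_. N)"
  proof -
    have "(\<lambda>x. x(i := x j, j := x i)) \<in> PiM I (\<lambda>_. N) \<rightarrow>\<^sub>M PiM I (\<lambda>_. N) \<longleftrightarrow>
          (\<lambda>x. \<lambda>k\<in>I. if k = i then x j else if k = j then x i else x k) \<in> PiM I (\<lambda>_. N) \<rightarrow>\<^sub>M PiM I (\<lambda>_. N)"
      using I by (intro measurable_cong) (auto simp: fun_eq_iff space_PiM PiE_def extensional_def)
    moreover have "(\<lambda>x. \<lambda>k\<in>I. if k = i then x j else if k = j then x i else x k) \<in> PiM I (\<lambda>_. N) \<rightarrow>\<^sub>M PiM I (\<lambda>_. N)"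
      apply (intro measurable_restrict)
      subgoal for k using I by (cases "k = i"; cases "k = j") auto
      done
    ultimately show ?thesis by simp
  qed
  have g[measurable]: "(\<lambda>x. f (x(i := x j, j := x i))) \<in> borel_measurable (PiM I (\<lambda>_. N))"
    using measurable_comp[OF sw f] by (simp add: comp_def)
  have ins: "integral\<^sup>N (PiM I (\<lambda>_. N)) h = (\<integral>\<^sup>+ x. \<integral>\<^sup>+ b. \<integral>\<^sup>+ a. h (x(j := b, i := a)) \<partial>N \<partial>N \<partial>PiM J (\<lambda>_. N))"
    if h[measurable]: "h \<in> borel_measurable (PiM I (\<lambda>_. N))" for h
  proof -
    have "integral\<^sup>N (PiM I (\<lambda>_. N)) h = (\<integral>\<^sup>+ y. \<integral>\<^sup>+ a. h (y(i := a)) \<partial>N \<partial>PiM (insert j J) (\<lambda>_. N))"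
      unfolding IJ(1) by (rule product_nn_integral_insert) (use IJ h in auto)
    also have "\<dots> = (\<integral>\<^sup>+ x. \<integral>\<^sup>+ b. \<integral>\<^sup>+ a. h (x(j := b, i := a)) \<partial>N \<partial>N \<partial>PiM J (\<lambda>_. N))"
    proof (rule product_nn_integral_insert)
      have "(\<lambda>(y, a). h (y(i := a))) \<in> borel_measurable (PiM (insert j J) (\<lambda>_. N) \<Otimes>\<^sub>M N)"
        using measurable_comp[OF measurable_add_dim[of i "insert j J" "\<lambda>_. N"] h[unfolded IJ(1)]]
        by (simp add: comp_def case_prod_beta')
      then show "(\<lambda>y. \<integral>\<^sup>+ a. h (y(i := a)) \<partial>N) \<in> borel_measurable (PiM (insert j J) (\<lambda>_. N))"
        by measurable
    qed (use IJ in auto)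
    finally show ?thesis .
  qed
  have "(\<integral>\<^sup>+ x. f (x(i := x j, j := x i)) \<partial>PiM I (\<lambda>_. N)) =
     (\<integral>\<^sup>+ x. \<integral>\<^sup>+ b. \<integral>\<^sup>+ a. f (x(j := a, i := b)) \<partial>N \<partial>N \<partial>PiM J (\<lambda>_. N))"
    using I by (subst ins[OF g]) (simp add: fun_upd_twist)
  also have "\<dots> = (\<integral>\<^sup>+ x. \<integral>\<^sup>+ b. \<integral>\<^sup>+ a. f (x(j := b, i := a)) \<partial>N \<partial>N \<partial>PiM J (\<lambda>_. N))"
  proof (rule nn_integral_cong)
    fix x assume x: "x \<in> space (PiM J (\<lambda>_. N))"
    have "(\<lambda>(a, b). f (x(j := a, i := b))) \<in> borel_measurable (N \<Otimes>\<^sub>M N)"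
      using measurable_comp[OF upd[OF x] f] by (simp add: comp_def case_prod_beta')
    from P.Fubini[OF this] show "(\<integral>\<^sup>+ b. \<integral>\<^sup>+ a. f (x(j := a, i := b)) \<partial>N \<partial>N) = (\<integral>\<^sup>+ b. \<integral>\<^sup>+ a. f (x(j := b, i := a)) \<partial>N \<partial>N)"
      by simp
  qed
  also have "\<dots> = integral\<^sup>N (PiM I (\<lambda>_. N)) f"
    by (rule ins[OF f, symmetric])
  finally show ?thesis .
qed

lemma swap_prod: fixes g :: "'a \<Rightarrow> 'b::comm_monoid_mult" assumes "i \<in> I" "j \<in> I"
  shows "(\<Prod>k\<in>I. g ((x(i := x j, j := x i)) k)) = (\<Prod>k\<in>I. g (x k))"
  apply (rule prod.reindex_bij_witness[of I "\<lambda>k. if k = i then j else if k = j then i else k" "\<lambda>k. if k = i then j else if k = j then i else k"])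
  using assms by auto
lemma swap_sum: fixes g :: "'a \<Rightarrow> 'b::comm_monoid_add" assumes "i \<in> I" "j \<in> I"
  shows "(\<Sum>k\<in>I. g ((x(i := x j, j := x i)) k)) = (\<Sum>k\<in>I. g (x k))"
  apply (rule sum.reindex_bij_witness[of I "\<lambda>k. if k = i then j else if k = j then i else k" "\<lambda>k. if k = i then j else if k = j then i else k"])
  using assms by auto

lemma sym_bound:
  fixes N :: "'a measure" and t v :: "'a \<Rightarrow> real" and K :: nat
  assumes sf: "sigma_finite_measure N"
    and tm[measurable]: "t \<in> borel_measurable N" and vm[measurable]: "v \<in> borel_measurable N"
    and tn: "\<And>a. a \<in> space N \<Longrightarrow> t a \<ge> 0" and vn: "\<And>a. a \<in> space N \<Longrightarrow> v a \<ge> 0"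
    and t1: "(\<integral>\<^sup>+ a. ennreal (t a) \<partial>N) = 1"
  shows "(\<integral>\<^sup>+ x. ennreal ((\<Prod>k\<in>{0..K}. t (x k)) * (v (x 0) / ((1 / real (K+1)) * (\<Sum>k\<in>{0..K}. v (x k))))) \<partial>PiM {0..K} (\<lambda>_. N)) \<le> 1"
proof -
  interpret product_sigma_finite "\<lambda>_. N" using sf by (simp add: product_sigma_finite_def)
  define I where "I = {0..K}"
  define F where "F j x = ennreal ((\<Prod>k\<in>I. t (x k)) * (v (x j) / ((1 / real (K+1)) * (\<Sum>k\<in>I. v (x k)))))" for j x
  have Fm[measurable]: "F j \<in> borel_measurable (PiM I (\<lambda>_. N))" if "j \<in> I" for j
    unfolding F_def using that I_def by measurable
  have sp: "x \<in> space (PiM I (\<lambda>_. N)) \<Longrightarrow> k \<in> I \<Longrightarrow> x k \<in> space N" for x k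
    by (auto simp: space_PiM)
  have eq: "integral\<^sup>N (PiM I (\<lambda>_. N)) (F j) = integral\<^sup>N (PiM I (\<lambda>_. N)) (F 0)" if j: "j \<in> I" for j
  proof (cases "j = 0")
    case False
    have "integral\<^sup>N (PiM I (\<lambda>_. N)) (F 0) = (\<integral>\<^sup>+ x. F 0 (x(0 := x j, j := x 0)) \<partial>PiM I (\<lambda>_. N))"
      by (rule PiM_swap_nn[symmetric]) (use sf j False Fm[of 0] in \<open>auto simp: I_def\<close>)
    also have "\<dots> = integral\<^sup>N (PiM I (\<lambda>_. N)) (F j)"
      unfolding F_def using j False I_def
    proof (intro nn_integral_cong)
      fix x
      have a: "(\<Prod>k\<in>I. t ((x(0 := x j, j := x 0)) k)) = (\<Prod>k\<in>I. t (x k))"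
        by (rule swap_prod) (use j in \<open>auto simp: I_def\<close>)
      have b: "(\<Sum>k\<in>I. v ((x(0 := x j, j := x 0)) k)) = (\<Sum>k\<in>I. v (x k))"
        by (rule swap_sum) (use j in \<open>auto simp: I_def\<close>)
      show "ennreal ((\<Prod>k\<in>I. t ((x(0 := x j, j := x 0)) k)) * (v ((x(0 := x j, j := x 0)) 0) / ((1 / real (K+1)) * (\<Sum>k\<in>I. v ((x(0 := x j, j := x 0)) k))))) =
            ennreal ((\<Prod>k\<in>I. t (x k)) * (v (x j) / ((1 / real (K+1)) * (\<Sum>k\<in>I. v (x k)))))"
        unfolding a b using False by simp
    qed
    finally show ?thesis by simp
  qed simp
  have pt: "(\<Sum>j\<in>I. F j x) \<le> ennreal (real (K+1)) * ennreal (\<Prod>k\<in>I. t (x k))" if x: "x \<in> space (PiM I (\<lambda>_. N))" for x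
  proof -
    define P where "P = (\<Prod>k\<in>I. t (x k))"
    define S where "S = (\<Sum>k\<in>I. v (x k))"
    have P0: "P \<ge> 0" unfolding P_def using x sp tn by (intro prod_nonneg) auto
    have S0: "S \<ge> 0" unfolding S_def using x sp vn by (intro sum_nonneg) auto
    have "(\<Sum>j\<in>I. F j x) = ennreal (\<Sum>j\<in>I. P * (v (x j) / ((1 / real (K+1)) * S)))"
      unfolding F_def P_def S_def
      by (rule sum_ennreal) (use x sp tn vn P0 S0 in \<open>auto simp: P_def S_def intro!: mult_nonneg_nonneg divide_nonneg_nonneg\<close>)
    also have "(\<Sum>j\<in>I. P * (v (x j) / ((1 / real (K+1)) * S))) = (\<Sum>j\<in>I. (P / ((1 / real (K+1)) * S)) * v (x j))"
      by (intro sum.cong) auto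
    also have "\<dots> = (P / ((1 / real (K+1)) * S)) * S"
      unfolding S_def by (rule sum_distrib_left[symmetric])
    also have "\<dots> \<le> real (K+1) * P"
      using P0 by (cases "S = 0") auto
    finally have "(\<Sum>j\<in>I. F j x) \<le> ennreal (real (K+1) * P)"
      using ennreal_leI by blast
    then show ?thesis using P0 by (simp add: ennreal_mult' P_def)
  qed
  have "(\<Sum>j\<in>I. integral\<^sup>N (PiM I (\<lambda>_. N)) (F j)) = (\<integral>\<^sup>+ x. (\<Sum>j\<in>I. F j x) \<partial>PiM I (\<lambda>_. N))"
    by (rule nn_integral_sum[symmetric]) simp
  also have "\<dots> \<le> (\<integral>\<^sup>+ x. ennreal (real (K+1)) * ennreal (\<Prod>k\<in>I. t (x k)) \<partial>PiM I (\<lambda>_. N))"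
    by (intro nn_integral_mono pt)
  also have "\<dots> = ennreal (real (K+1)) * (\<integral>\<^sup>+ x. (\<Prod>k\<in>I. ennreal (t (x k))) \<partial>PiM I (\<lambda>_. N))"
  proof (subst nn_integral_cmult)
    show "ennreal (real (K + 1)) * (\<integral>\<^sup>+ x. ennreal (\<Prod>k\<in>I. t (x k)) \<partial>PiM I (\<lambda>_. N)) =
      ennreal (real (K + 1)) * (\<integral>\<^sup>+ x. (\<Prod>k\<in>I. ennreal (t (x k))) \<partial>PiM I (\<lambda>_. N))"
      by (intro arg_cong2[where f="(*)"] refl nn_integral_cong prod_ennreal[symmetric]) (auto simp: sp tn)
  qed (unfold I_def, measurable)
  also have "\<dots> = ennreal (real (K+1))"
    by (subst product_nn_integral_prod) (simp_all add: I_def t1)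
  finally have le: "(\<Sum>j\<in>I. integral\<^sup>N (PiM I (\<lambda>_. N)) (F j)) \<le> ennreal (real (K+1))" .
  have "(\<Sum>j\<in>I. integral\<^sup>N (PiM I (\<lambda>_. N)) (F j)) = (\<Sum>j\<in>I. integral\<^sup>N (PiM I (\<lambda>_. N)) (F 0))"
    by (rule sum.cong[OF refl eq])
  also have "\<dots> = ennreal (real (K+1)) * integral\<^sup>N (PiM I (\<lambda>_. N)) (F 0)"
    by (simp add: I_def ennreal_of_nat_eq_real_of_nat)
  finally have "ennreal (real (K+1)) * integral\<^sup>N (PiM I (\<lambda>_. N)) (F 0) \<le> ennreal (real (K+1)) * 1"
    using le by simp
  then have "integral\<^sup>N (PiM I (\<lambda>_. N)) (F 0) \<le> 1"
    by (subst (asm) ennreal_mult_le_mult_iff) (auto simp del: of_nat_Suc)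
  then show ?thesis unfolding F_def I_def by simp
qed


lemma nn_integral_pair_mult:
  assumes A: "sigma_finite_measure A" and B: "sigma_finite_measure B"
    and [measurable]: "a \<in> borel_measurable A" "b \<in> borel_measurable B"
  shows "(\<integral>\<^sup>+ p. a (fst p) * b (snd p) \<partial>(A \<Otimes>\<^sub>M B)) = (\<integral>\<^sup>+ x. a x \<partial>A) * (\<integral>\<^sup>+ y. b y \<partial>B)"
proof -
  interpret B: sigma_finite_measure B by fact
  have "(\<integral>\<^sup>+ p. a (fst p) * b (snd p) \<partial>(A \<Otimes>\<^sub>M B)) = (\<integral>\<^sup>+ x. \<integral>\<^sup>+ y. a x * b y \<partial>B \<partial>A)"
    by (subst B.nn_integral_fst[symmetric]) simp_all
  also have "\<dots> = (\<integral>\<^sup>+ x. a x * (\<integral>\<^sup>+ y. b y \<partial>B) \<partial>A)"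
    by (intro nn_integral_cong nn_integral_cmult) simp
  also have "\<dots> = (\<integral>\<^sup>+ x. a x \<partial>A) * (\<integral>\<^sup>+ y. b y \<partial>B)"
    by (rule nn_integral_multc) simp
  finally show ?thesis .
qed

lemma prod_upd_one: fixes f :: "'a \<Rightarrow> 'b::comm_monoid_mult"
  shows "finite S \<Longrightarrow> l \<in> S \<Longrightarrow> (\<Prod>i\<in>S. (if i = l then g i else f i)) = g l * (\<Prod>i\<in>S-{l}. f i)"
  by (simp add: prod.remove[of S l])

locale dsetup =
  fixes Mz :: "'z measure" and Mpsi :: "'b measure" and Mzeta :: "'c measure"
    and K L :: nat
    and lik :: "'z \<Rightarrow> real" and pj :: "'z \<Rightarrow> 'c \<Rightarrow> real"
    and q tau :: "'z \<Rightarrow> 'b \<Rightarrow> real" and rho :: "'z \<Rightarrow> 'c \<Rightarrow> real"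
  assumes sf: "sigma_finite_measure Mz" "sigma_finite_measure Mpsi" "sigma_finite_measure Mzeta"
    and L1: "L \<ge> 1"
    and lik_meas: "lik \<in> borel_measurable Mz" and lik_nn: "\<And>z. z \<in> space Mz \<Longrightarrow> lik z \<ge> 0"
    and pj_meas: "(\<lambda>(z, zeta). pj z zeta) \<in> borel_measurable (Mz \<Otimes>\<^sub>M Mzeta)"
    and pj_nn: "\<And>z zeta. z \<in> space Mz \<Longrightarrow> zeta \<in> space Mzeta \<Longrightarrow> pj z zeta \<ge> 0"
    and q_meas: "(\<lambda>(z, psi). q z psi) \<in> borel_measurable (Mz \<Otimes>\<^sub>M Mpsi)"
    and q_nn: "\<And>z psi. z \<in> space Mz \<Longrightarrow> psi \<in> space Mpsi \<Longrightarrow> q z psi \<ge> 0"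
    and q_prob: "(\<integral>\<^sup>+ w. ennreal (case w of (z, psi) \<Rightarrow> q z psi) \<partial>(Mz \<Otimes>\<^sub>M Mpsi)) = 1"
    and tau_meas: "(\<lambda>(z, psi). tau z psi) \<in> borel_measurable (Mz \<Otimes>\<^sub>M Mpsi)"
    and tau_nn: "\<And>z psi. z \<in> space Mz \<Longrightarrow> psi \<in> space Mpsi \<Longrightarrow> tau z psi \<ge> 0"
    and tau_prob: "\<And>z. z \<in> space Mz \<Longrightarrow> (\<integral>\<^sup>+ psi. ennreal (tau z psi) \<partial>Mpsi) = 1"
    and tau_supp: "\<And>z psi. z \<in> space Mz \<Longrightarrow> psi \<in> space Mpsi \<Longrightarrow> tau z psi = 0 \<Longrightarrow> q z psi = 0"
    and rho_meas: "(\<lambda>(z, zeta). rho z zeta) \<in> borel_measurable (Mz \<Otimes>\<^sub>M Mzeta)"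
    and rho_nn: "\<And>z zeta. z \<in> space Mz \<Longrightarrow> zeta \<in> space Mzeta \<Longrightarrow> rho z zeta \<ge> 0"
    and rho_prob: "\<And>z. z \<in> space Mz \<Longrightarrow> (\<integral>\<^sup>+ zeta. ennreal (rho z zeta) \<partial>Mzeta) = 1"
    and px_fin: "evidence Mz Mzeta lik pj < \<infinity>"
    and elbo_pos: "AE z in qz_measure Mz Mpsi q. lik z * marg Mzeta pj z / marg Mpsi q z > 0"
    and elbo_int: "integrable (qz_measure Mz Mpsi q) (elbo_integrand Mpsi Mzeta lik pj q)"
    and diw_pos: "AE w in joint_measure Mz Mpsi Mzeta K L q tau rho. diw_ratio K L lik pj q tau rho w > 0"
    and diw_int: "integrable (joint_measure Mz Mpsi Mzeta K L q tau rho) (diw_integrand K L lik pj q tau rho)"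
begin

lemma q_comp[measurable (raw)]:
  "f \<in> N \<rightarrow>\<^sub>M Mz \<Longrightarrow> g \<in> N \<rightarrow>\<^sub>M Mpsi \<Longrightarrow> (\<lambda>x. q (f x) (g x)) \<in> borel_measurable N"
  using measurable_compose[OF measurable_Pair q_meas] by simp
lemma tau_comp[measurable (raw)]:
  "f \<in> N \<rightarrow>\<^sub>M Mz \<Longrightarrow> g \<in> N \<rightarrow>\<^sub>M Mpsi \<Longrightarrow> (\<lambda>x. tau (f x) (g x)) \<in> borel_measurable N"
  using measurable_compose[OF measurable_Pair tau_meas] by simp
lemma pj_comp[measurable (raw)]:
  "f \<in> N \<rightarrow>\<^sub>M Mz \<Longrightarrow> g \<in> N \<rightarrow>\<^sub>M Mzeta \<Longrightarrow> (\<lambda>x. pj (f x) (g x)) \<in> borel_measurable N"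
  using measurable_compose[OF measurable_Pair pj_meas] by simp
lemma rho_comp[measurable (raw)]:
  "f \<in> N \<rightarrow>\<^sub>M Mz \<Longrightarrow> g \<in> N \<rightarrow>\<^sub>M Mzeta \<Longrightarrow> (\<lambda>x. rho (f x) (g x)) \<in> borel_measurable N"
  using measurable_compose[OF measurable_Pair rho_meas] by simp
lemmas lik_m[measurable] = lik_meas

abbreviation "mq \<equiv> marg Mpsi q"
abbreviation "mp \<equiv> marg Mzeta pj"
abbreviation "Qz \<equiv> qz_measure Mz Mpsi q"
abbreviation "JJ \<equiv> joint_measure Mz Mpsi Mzeta K L q tau rho"
definition "ff z = lik z * mp z / mq z"

lemma mq_meas[measurable]: "mq \<in> borel_measurable Mz"
  unfolding marg_def
  by (intro borel_measurable_enn2real sigma_finite_measure.borel_measurable_nn_integral[OF sf(2)]) measurable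
lemma mp_meas[measurable]: "mp \<in> borel_measurable Mz"
  unfolding marg_def
  by (intro borel_measurable_enn2real sigma_finite_measure.borel_measurable_nn_integral[OF sf(3)]) measurable
lemma ff_meas[measurable]: "ff \<in> borel_measurable Mz"
  unfolding ff_def by measurable

lemma mq_nn: "mq z \<ge> 0" and mp_nn: "mp z \<ge> 0"
  by (simp_all add: marg_def)

lemma ff_nn: "z \<in> space Mz \<Longrightarrow> ff z \<ge> 0"
  unfolding ff_def using lik_nn mq_nn mp_nn by simp

lemma iq_AE: "AE z in Mz. (\<integral>\<^sup>+ a. ennreal (q z a) \<partial>Mpsi) \<noteq> \<infinity>"
  and iq_total: "(\<integral>\<^sup>+ z. (\<integral>\<^sup>+ a. ennreal (q z a) \<partial>Mpsi) \<partial>Mz) = 1"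
proof -
  interpret P: sigma_finite_measure Mpsi by (rule sf)
  show t: "(\<integral>\<^sup>+ z. (\<integral>\<^sup>+ a. ennreal (q z a) \<partial>Mpsi) \<partial>Mz) = 1"
    using P.nn_integral_fst[of "\<lambda>w. ennreal (case w of (z, psi) \<Rightarrow> q z psi)" Mz] q_prob
    by (simp add: case_prod_beta')
  show "AE z in Mz. (\<integral>\<^sup>+ a. ennreal (q z a) \<partial>Mpsi) \<noteq> \<infinity>"
    by (rule nn_integral_PInf_AE) (use t in auto)
qed


lemma mq_total: "(\<integral>\<^sup>+ z. ennreal (mq z) \<partial>Mz) = 1"
proof -
  have "(\<integral>\<^sup>+ z. ennreal (mq z) \<partial>Mz) = (\<integral>\<^sup>+ z. (\<integral>\<^sup>+ a. ennreal (q z a) \<partial>Mpsi) \<partial>Mz)"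
    by (intro nn_integral_cong_AE) (use iq_AE in \<open>auto simp: marg_def ennreal_enn2real less_top\<close>)
  then show ?thesis using iq_total by simp
qed


lemma Qz_prob: "prob_space Qz"
proof (rule prob_spaceI)
  have "emeasure Qz (space Qz) = emeasure (density Mz (\<lambda>z. ennreal (mq z))) (space Mz)"
    by (simp add: qz_measure_def)
  also have "\<dots> = (\<integral>\<^sup>+ z. ennreal (mq z) * indicator (space Mz) z \<partial>Mz)"
    by (rule emeasure_density) auto
  also have "\<dots> = (\<integral>\<^sup>+ z. ennreal (mq z) \<partial>Mz)"
    by (rule nn_integral_cong) simp
  also have "\<dots> = 1" by (rule mq_total)
  finally show "emeasure Qz (space Qz) = 1" .
qed

lemma ff_Qz_meas[measurable]: "ff \<in> borel_measurable Qz"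
  by (simp add: qz_measure_def)

lemma elbo_ff: "elbo_integrand Mpsi Mzeta lik pj q z = ln (ff z)"
  by (simp add: elbo_integrand_def ff_def)

lemma ff_pos: "AE z in Qz. ff z > 0"
  using elbo_pos by (simp add: ff_def)

lemma ff_int_le: "(\<integral>\<^sup>+ z. ennreal (ff z) \<partial>Qz) \<le> evidence Mz Mzeta lik pj"
proof -
  have "(\<integral>\<^sup>+ z. ennreal (ff z) \<partial>Qz) = (\<integral>\<^sup>+ z. ennreal (mq z) * ennreal (ff z) \<partial>Mz)"
    unfolding qz_measure_def by (rule nn_integral_density) auto
  also have "\<dots> \<le> (\<integral>\<^sup>+ z. ennreal (lik z * mp z) \<partial>Mz)"
  proof (rule nn_integral_mono)
    fix z assume z: "z \<in> space Mz"
    have "ennreal (mq z) * ennreal (ff z) = ennreal (mq z * ff z)"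
      using mq_nn ff_nn[OF z] by (simp add: ennreal_mult)
    also have "mq z * ff z \<le> lik z * mp z"
      using lik_nn[OF z] mp_nn[of z] by (cases "mq z = 0") (auto simp: ff_def)
    then have "ennreal (mq z * ff z) \<le> ennreal (lik z * mp z)" by (rule ennreal_leI)
    finally show "ennreal (mq z) * ennreal (ff z) \<le> ennreal (lik z * mp z)" .
  qed
  finally show ?thesis by (simp add: evidence_def)
qed

lemma P_pos: "0 < enn2real (evidence Mz Mzeta lik pj)"
proof (rule ccontr)
  assume "\<not> ?thesis"
  then have "enn2real (evidence Mz Mzeta lik pj) = 0" using enn2real_nonneg by (meson not_less order_antisym)
  then have "evidence Mz Mzeta lik pj = 0" using px_fin by (auto simp: enn2real_eq_0_iff)
  then have "(\<integral>\<^sup>+ z. ennreal (ff z) \<partial>Qz) = 0" using ff_int_le by simp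
  then have "AE z in Qz. ennreal (ff z) = 0" by (subst (asm) nn_integral_0_iff_AE) auto
  with ff_pos have "AE z in Qz. False" by eventually_elim simp
  then show False using prob_space.AE_False[OF Qz_prob] by simp
qed

lemma part1: "(\<integral> z. elbo_integrand Mpsi Mzeta lik pj q z \<partial>Qz) \<le> ln (enn2real (evidence Mz Mzeta lik pj))"
proof -
  interpret Q: prob_space Qz by (rule Qz_prob)
  define P where "P = enn2real (evidence Mz Mzeta lik pj)"
  have P0: "P > 0" using P_pos by (simp add: P_def)
  have eP: "evidence Mz Mzeta lik pj = ennreal P"
    using px_fin by (simp add: P_def less_top)
  have intf: "integrable Qz (\<lambda>z. ln (ff z))"
    using elbo_int by (simp add: elbo_ff[abs_def])
  have intg: "integrable Qz (\<lambda>z. ln (ff z) - ln P + 1)"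
    using intf by auto
  have "(\<integral>\<^sup>+ z. ennreal (ln (ff z) - ln P + 1) \<partial>Qz) \<le> (\<integral>\<^sup>+ z. ennreal (ff z / P) \<partial>Qz)"
  proof (rule nn_integral_mono_AE)
    show "AE z in Qz. ennreal (ln (ff z) - ln P + 1) \<le> ennreal (ff z / P)"
      using ff_pos
    proof eventually_elim
      case (elim z)
      have "ln (ff z) - ln P = ln (ff z / P)" using elim P0 by (simp add: ln_div)
      also have "\<dots> \<le> ff z / P - 1" using elim P0 by (intro ln_le_minus_one) simp
      finally show ?case by (intro ennreal_leI) simp
    qed
  qed
  also have "\<dots> = (\<integral>\<^sup>+ z. ennreal (ff z) * ennreal (1 / P) \<partial>Qz)"
    using P0 by (intro nn_integral_cong) (simp add: ennreal_mult'' divide_inverse)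
  also have "\<dots> = (\<integral>\<^sup>+ z. ennreal (ff z) \<partial>Qz) * ennreal (1 / P)"
    by (rule nn_integral_multc) simp
  also have "\<dots> \<le> ennreal P * ennreal (1 / P)"
    using ff_int_le eP by (intro mult_right_mono) auto
  also have "\<dots> = ennreal 1"
    using P0 by (simp add: ennreal_mult''[symmetric])
  finally have "(\<integral> z. ln (ff z) - ln P + 1 \<partial>Qz) \<le> 1"
    by (intro integral_real_bounded) auto
  moreover have "(\<integral> z. ln (ff z) - ln P + 1 \<partial>Qz) = (\<integral> z. ln (ff z) \<partial>Qz) - ln P + 1"
    using intf by (simp add: Q.prob_space)
  ultimately show ?thesis by (simp add: elbo_ff P_def)
qed

abbreviation "Pk \<equiv> PiM {1..K} (\<lambda>_. Mpsi)"
abbreviation "Pl \<equiv> PiM {1..L} (\<lambda>_. Mzeta)"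
abbreviation "PPr \<equiv> (Mz \<Otimes>\<^sub>M Mpsi) \<Otimes>\<^sub>M (Pk \<Otimes>\<^sub>M Pl)"
definition "DD w = ennreal (q (fst (fst w)) (snd (fst w)) * (\<Prod>k\<in>{1..K}. tau (fst (fst w)) (fst (snd w) k))
   * (\<Prod>l\<in>{1..L}. rho (fst (fst w)) (snd (snd w) l)))"

lemma JJ_eq: "JJ = density PPr DD"
  unfolding joint_measure_def DD_def by (simp add: split_beta')

lemma DD_meas[measurable]: "DD \<in> borel_measurable PPr"
  unfolding DD_def by measurable

lemma sf_Pk: "sigma_finite_measure Pk"
  by (rule product_sigma_finite.sigma_finite) (use sf in \<open>auto simp: product_sigma_finite_def\<close>)
lemma sf_Pl: "sigma_finite_measure Pl"
  by (rule product_sigma_finite.sigma_finite) (use sf in \<open>auto simp: product_sigma_finite_def\<close>)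
lemma sf_A: "sigma_finite_measure (Mz \<Otimes>\<^sub>M Mpsi)"
  by (rule sigma_finite_pair_measure) (use sf in auto)
lemma sf_B: "sigma_finite_measure (Pk \<Otimes>\<^sub>M Pl)"
  by (rule sigma_finite_pair_measure) (use sf_Pk sf_Pl in auto)

lemma tau_prod_int: "z \<in> space Mz \<Longrightarrow> (\<integral>\<^sup>+ x. ennreal (\<Prod>k\<in>{1..K}. tau z (x k)) \<partial>Pk) = 1"
proof -
  assume z: "z \<in> space Mz"
  interpret product_sigma_finite "\<lambda>_. Mpsi" using sf by (simp add: product_sigma_finite_def)
  have "(\<integral>\<^sup>+ x. ennreal (\<Prod>k\<in>{1..K}. tau z (x k)) \<partial>Pk) = (\<integral>\<^sup>+ x. (\<Prod>k\<in>{1..K}. ennreal (tau z (x k))) \<partial>Pk)"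
    by (intro nn_integral_cong prod_ennreal[symmetric] tau_nn z) (auto simp: space_PiM)
  also have "\<dots> = (\<Prod>k\<in>{1..K}. (\<integral>\<^sup>+ a. ennreal (tau z a) \<partial>Mpsi))"
    using z by (subst product_nn_integral_prod) auto
  also have "\<dots> = 1" using tau_prob[OF z] by simp
  finally show ?thesis .
qed

lemma rho_prod_int: "z \<in> space Mz \<Longrightarrow> (\<integral>\<^sup>+ x. ennreal (\<Prod>l\<in>{1..L}. rho z (x l)) \<partial>Pl) = 1"
proof -
  assume z: "z \<in> space Mz"
  interpret product_sigma_finite "\<lambda>_. Mzeta" using sf by (simp add: product_sigma_finite_def)
  have "(\<integral>\<^sup>+ x. ennreal (\<Prod>l\<in>{1..L}. rho z (x l)) \<partial>Pl) = (\<integral>\<^sup>+ x. (\<Prod>l\<in>{1..L}. ennreal (rho z (x l))) \<partial>Pl)"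
    by (intro nn_integral_cong prod_ennreal[symmetric] rho_nn z) (auto simp: space_PiM)
  also have "\<dots> = (\<Prod>l\<in>{1..L}. (\<integral>\<^sup>+ a. ennreal (rho z a) \<partial>Mzeta))"
    using z by (subst product_nn_integral_prod) auto
  also have "\<dots> = 1" using rho_prob[OF z] by simp
  finally show ?thesis .
qed

lemma marg_nn:
  assumes g[measurable]: "g \<in> borel_measurable Mz"
  shows "(\<integral>\<^sup>+ w. DD w * g (fst (fst w)) \<partial>PPr) = (\<integral>\<^sup>+ z. ennreal (mq z) * g z \<partial>Mz)"
proof -
  interpret B: sigma_finite_measure "Pk \<Otimes>\<^sub>M Pl" by (rule sf_B)
  interpret Psi: sigma_finite_measure Mpsi by (rule sf(2))
  have "(\<integral>\<^sup>+ w. DD w * g (fst (fst w)) \<partial>PPr) = (\<integral>\<^sup>+ x. \<integral>\<^sup>+ y. DD (x, y) * g (fst x) \<partial>(Pk \<Otimes>\<^sub>M Pl) \<partial>(Mz \<Otimes>\<^sub>M Mpsi))"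
  proof -
    have m: "(\<lambda>w. DD w * g (fst (fst w))) \<in> borel_measurable PPr" by measurable
    show ?thesis using B.nn_integral_fst[OF m] by simp
  qed
  also have "\<dots> = (\<integral>\<^sup>+ x. ennreal (q (fst x) (snd x)) * g (fst x) \<partial>(Mz \<Otimes>\<^sub>M Mpsi))"
  proof (rule nn_integral_cong)
    fix x assume x: "x \<in> space (Mz \<Otimes>\<^sub>M Mpsi)"
    then have z: "fst x \<in> space Mz" and a: "snd x \<in> space Mpsi" by (auto simp: space_pair_measure)
    have "(\<integral>\<^sup>+ y. DD (x, y) * g (fst x) \<partial>(Pk \<Otimes>\<^sub>M Pl)) =
      (\<integral>\<^sup>+ y. (ennreal (q (fst x) (snd x)) * g (fst x)) * (ennreal (\<Prod>k\<in>{1..K}. tau (fst x) (fst y k)) * ennreal (\<Prod>l\<in>{1..L}. rho (fst x) (snd y l))) \<partial>(Pk \<Otimes>\<^sub>M Pl))"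
    proof (rule nn_integral_cong)
      fix y assume y: "y \<in> space (Pk \<Otimes>\<^sub>M Pl)"
      have t: "(\<Prod>k\<in>{1..K}. tau (fst x) (fst y k)) \<ge> 0"
        using y z by (intro prod_nonneg tau_nn) (auto simp: space_pair_measure space_PiM)
      have r: "(\<Prod>l\<in>{1..L}. rho (fst x) (snd y l)) \<ge> 0"
        using y z by (intro prod_nonneg rho_nn) (auto simp: space_pair_measure space_PiM)
      show "DD (x, y) * g (fst x) = (ennreal (q (fst x) (snd x)) * g (fst x)) * (ennreal (\<Prod>k\<in>{1..K}. tau (fst x) (fst y k)) * ennreal (\<Prod>l\<in>{1..L}. rho (fst x) (snd y l)))"
        unfolding DD_def using t r q_nn[OF z a] by (simp add: ennreal_mult mult_ac)
    qed
    also have "\<dots> = (ennreal (q (fst x) (snd x)) * g (fst x)) * (\<integral>\<^sup>+ y. ennreal (\<Prod>k\<in>{1..K}. tau (fst x) (fst y k)) * ennreal (\<Prod>l\<in>{1..L}. rho (fst x) (snd y l)) \<partial>(Pk \<Otimes>\<^sub>M Pl))"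
      using z by (intro nn_integral_cmult) measurable
    also have "(\<integral>\<^sup>+ y. ennreal (\<Prod>k\<in>{1..K}. tau (fst x) (fst y k)) * ennreal (\<Prod>l\<in>{1..L}. rho (fst x) (snd y l)) \<partial>(Pk \<Otimes>\<^sub>M Pl)) = 1"
    proof -
      have "(\<integral>\<^sup>+ y. ennreal (\<Prod>k\<in>{1..K}. tau (fst x) (fst y k)) * ennreal (\<Prod>l\<in>{1..L}. rho (fst x) (snd y l)) \<partial>(Pk \<Otimes>\<^sub>M Pl))
         = (\<integral>\<^sup>+ y. ennreal (\<Prod>k\<in>{1..K}. tau (fst x) (y k)) \<partial>Pk) * (\<integral>\<^sup>+ y. ennreal (\<Prod>l\<in>{1..L}. rho (fst x) (y l)) \<partial>Pl)"
        using z by (intro nn_integral_pair_mult[OF sf_Pk sf_Pl]) measurable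
      then show ?thesis unfolding tau_prod_int[OF z] rho_prod_int[OF z] by simp
    qed
    finally show "(\<integral>\<^sup>+ y. DD (x, y) * g (fst x) \<partial>(Pk \<Otimes>\<^sub>M Pl)) = ennreal (q (fst x) (snd x)) * g (fst x)" by simp
  qed
  also have "\<dots> = (\<integral>\<^sup>+ z. \<integral>\<^sup>+ a. ennreal (q z a) * g z \<partial>Mpsi \<partial>Mz)"
  proof -
    have m: "(\<lambda>x. ennreal (q (fst x) (snd x)) * g (fst x)) \<in> borel_measurable (Mz \<Otimes>\<^sub>M Mpsi)" by measurable
    show ?thesis using Psi.nn_integral_fst[OF m] by simp
  qed
  also have "\<dots> = (\<integral>\<^sup>+ z. (\<integral>\<^sup>+ a. ennreal (q z a) \<partial>Mpsi) * g z \<partial>Mz)"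
    by (intro nn_integral_cong nn_integral_multc) measurable
  also have "\<dots> = (\<integral>\<^sup>+ z. ennreal (mq z) * g z \<partial>Mz)"
    by (intro nn_integral_cong_AE) (use iq_AE in \<open>auto simp: marg_def ennreal_enn2real less_top\<close>)
  finally show ?thesis .
qed

lemma T_meas[measurable]: "(\<lambda>w. fst (fst w)) \<in> JJ \<rightarrow>\<^sub>M Mz"
  unfolding JJ_eq by simp

lemma JJ_distr: "distr JJ Mz (\<lambda>w. fst (fst w)) = Qz"
proof (rule measure_eqI)
  show "sets (distr JJ Mz (\<lambda>w. fst (fst w))) = sets Qz" by (simp add: qz_measure_def)
next
  fix A assume "A \<in> sets (distr JJ Mz (\<lambda>w. fst (fst w)))"
  then have A[measurable]: "A \<in> sets Mz" by simp
  have "emeasure (distr JJ Mz (\<lambda>w. fst (fst w))) A = emeasure JJ ((\<lambda>w. fst (fst w)) -` A \<inter> space JJ)"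
    by (rule emeasure_distr) auto
  also have "\<dots> = (\<integral>\<^sup>+ w. DD w * indicator ((\<lambda>w. fst (fst w)) -` A \<inter> space PPr) w \<partial>PPr)"
    unfolding JJ_eq by (subst emeasure_density[OF DD_meas]) auto
  also have "\<dots> = (\<integral>\<^sup>+ w. DD w * indicator A (fst (fst w)) \<partial>PPr)"
    by (intro nn_integral_cong) (auto simp: indicator_def)
  also have "\<dots> = (\<integral>\<^sup>+ z. ennreal (mq z) * indicator A z \<partial>Mz)"
    by (rule marg_nn) simp
  also have "\<dots> = emeasure Qz A"
    unfolding qz_measure_def by (subst emeasure_density) auto
  finally show "emeasure (distr JJ Mz (\<lambda>w. fst (fst w))) A = emeasure Qz A" .
qed

lemma JJ_prob: "prob_space JJ"
proof (rule prob_spaceI)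
  have "emeasure JJ (space JJ) = emeasure (distr JJ Mz (\<lambda>w. fst (fst w))) (space Mz)"
  proof -
    have "(\<lambda>w. fst (fst w)) -` space Mz \<inter> space JJ = space JJ"
      by (auto simp: JJ_eq space_pair_measure)
    then show ?thesis by (subst emeasure_distr) auto
  qed
  also have "\<dots> = emeasure Qz (space Qz)" by (simp add: JJ_distr qz_measure_def)
  also have "\<dots> = 1" using prob_space.emeasure_space_1[OF Qz_prob] .
  finally show "emeasure JJ (space JJ) = 1" .
qed

lemma ff_pos_JJ: "AE w in JJ. ff (fst (fst w)) > 0"
proof -
  have "AE z in distr JJ Mz (\<lambda>w. fst (fst w)). ff z > 0" unfolding JJ_distr by (rule ff_pos)
  then show ?thesis by (subst (asm) AE_distr_iff) auto
qed

lemma ff_int_JJ: "integrable JJ (\<lambda>w. ln (ff (fst (fst w))))"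
  and ff_integral_JJ: "(\<integral> w. ln (ff (fst (fst w))) \<partial>JJ) = (\<integral> z. ln (ff z) \<partial>Qz)"
proof -
  have i: "integrable Qz (\<lambda>z. ln (ff z))"
    using elbo_int by (simp add: elbo_ff[abs_def])
  show "integrable JJ (\<lambda>w. ln (ff (fst (fst w))))"
    using i unfolding JJ_distr[symmetric] by (subst (asm) integrable_distr_eq) auto
  show "(\<integral> w. ln (ff (fst (fst w))) \<partial>JJ) = (\<integral> z. ln (ff z) \<partial>Qz)"
    unfolding JJ_distr[symmetric] by (subst integral_distr) auto
qed

definition "AA z zs = (1 / real L) * (\<Sum>l\<in>{1..L}. pj z (zs l) / rho z (zs l))"
definition "BB z a ps = (1 / real (K + 1)) * (q z a / tau z a + (\<Sum>k\<in>{1..K}. q z (ps k) / tau z (ps k)))"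

lemma zeta_bound:
  assumes z: "z \<in> space Mz"
  shows "(\<integral>\<^sup>+ zs. ennreal ((\<Prod>l\<in>{1..L}. rho z (zs l)) * (AA z zs / mp z)) \<partial>Pl) \<le> 1"
proof (cases "mp z = 0")
  case True then show ?thesis by simp
next
  case False
  interpret product_sigma_finite "\<lambda>_. Mzeta" using sf by (simp add: product_sigma_finite_def)
  have mp0: "mp z > 0" using False mp_nn[of z] by simp
  have ipj: "(\<integral>\<^sup>+ a. ennreal (pj z a) \<partial>Mzeta) = ennreal (mp z)"
  proof -
    have "(\<integral>\<^sup>+ a. ennreal (pj z a) \<partial>Mzeta) \<noteq> \<top>"
      using False by (auto simp: marg_def)
    then show ?thesis by (simp add: marg_def ennreal_enn2real less_top)
  qed
  define S where "S = {1..L}"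
  have S: "finite S" by (simp add: S_def)
  define hh where "hh (l::nat) (l'::nat) a = (if l' = l then rho z a * (pj z a / rho z a) / mp z else rho z a)" for l l' a
  have hh_nn: "a \<in> space Mzeta \<Longrightarrow> hh l l' a \<ge> 0" for l l' a
    unfolding hh_def using rho_nn[OF z] pj_nn[OF z] mp0 by auto
  have hh_m[measurable]: "hh l l' \<in> borel_measurable Mzeta" for l l'
    unfolding hh_def using z by measurable
  have eq: "ennreal ((\<Prod>l\<in>S. rho z (zs l)) * (AA z zs / mp z)) =
      (\<Sum>l\<in>S. ennreal (1 / real L) * (\<Prod>l'\<in>S. ennreal (hh l l' (zs l'))))"
    if zs: "zs \<in> space Pl" for zs
  proof -
    have sp: "l \<in> S \<Longrightarrow> zs l \<in> space Mzeta" for l using zs by (auto simp: space_PiM S_def)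
    have "(\<Prod>l\<in>S. rho z (zs l)) * (AA z zs / mp z) =
        (\<Sum>l\<in>S. (1 / real L) * ((\<Prod>l\<in>S. rho z (zs l)) * (pj z (zs l) / rho z (zs l)) / mp z))"
      unfolding AA_def S_def by (simp add: sum_distrib_left sum_divide_distrib mult_ac)
    also have "\<dots> = (\<Sum>l\<in>S. (1 / real L) * (\<Prod>l'\<in>S. hh l l' (zs l')))"
    proof (intro sum.cong refl arg_cong2[where f="(*)"])
      fix l assume l: "l \<in> S"
      have "(\<Prod>l'\<in>S. hh l l' (zs l')) = (rho z (zs l) * (pj z (zs l) / rho z (zs l)) / mp z) * (\<Prod>l'\<in>S-{l}. rho z (zs l'))"
        unfolding hh_def using prod_upd_one[OF S l, of "\<lambda>l'. rho z (zs l') * (pj z (zs l') / rho z (zs l')) / mp z" "\<lambda>l'. rho z (zs l')"]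
        by (simp add: if_distrib)
      also have "\<dots> = (\<Prod>l\<in>S. rho z (zs l)) * (pj z (zs l) / rho z (zs l)) / mp z"
        using prod.remove[OF S l, of "\<lambda>l'. rho z (zs l')"] by simp
      finally show "(\<Prod>l\<in>S. rho z (zs l)) * (pj z (zs l) / rho z (zs l)) / mp z = (\<Prod>l'\<in>S. hh l l' (zs l'))" by simp
    qed
    finally have "(\<Prod>l\<in>S. rho z (zs l)) * (AA z zs / mp z) = (\<Sum>l\<in>S. (1 / real L) * (\<Prod>l'\<in>S. hh l l' (zs l')))" .
    moreover have "(\<Sum>l\<in>S. ennreal (1 / real L) * (\<Prod>l'\<in>S. ennreal (hh l l' (zs l')))) =
        (\<Sum>l\<in>S. ennreal ((1 / real L) * (\<Prod>l'\<in>S. hh l l' (zs l'))))"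
    proof (intro sum.cong refl)
      fix l assume l: "l \<in> S"
      have p: "(\<Prod>l'\<in>S. ennreal (hh l l' (zs l'))) = ennreal (\<Prod>l'\<in>S. hh l l' (zs l'))"
        by (rule prod_ennreal) (use sp hh_nn in auto)
      have "0 \<le> (\<Prod>l'\<in>S. hh l l' (zs l'))" by (intro prod_nonneg) (use sp hh_nn in auto)
      then show "ennreal (1 / real L) * (\<Prod>l'\<in>S. ennreal (hh l l' (zs l'))) = ennreal ((1 / real L) * (\<Prod>l'\<in>S. hh l l' (zs l')))"
        unfolding p by (rule ennreal_mult''[symmetric])
    qed
    moreover have "(\<Sum>l\<in>S. ennreal ((1 / real L) * (\<Prod>l'\<in>S. hh l l' (zs l')))) = ennreal (\<Sum>l\<in>S. (1 / real L) * (\<Prod>l'\<in>S. hh l l' (zs l')))"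
      by (rule sum_ennreal) (use sp hh_nn in \<open>auto intro!: prod_nonneg divide_nonneg_nonneg\<close>)
    ultimately show ?thesis by simp
  qed
  have "(\<integral>\<^sup>+ zs. ennreal ((\<Prod>l\<in>S. rho z (zs l)) * (AA z zs / mp z)) \<partial>Pl) =
      (\<integral>\<^sup>+ zs. (\<Sum>l\<in>S. ennreal (1 / real L) * (\<Prod>l'\<in>S. ennreal (hh l l' (zs l')))) \<partial>Pl)"
    by (intro nn_integral_cong eq)
  also have "\<dots> = (\<Sum>l\<in>S. ennreal (1 / real L) * (\<integral>\<^sup>+ zs. (\<Prod>l'\<in>S. ennreal (hh l l' (zs l'))) \<partial>Pl))"
    by (subst nn_integral_sum) (auto simp: S_def intro!: sum.cong nn_integral_cmult)
  also have "\<dots> = (\<Sum>l\<in>S. ennreal (1 / real L) * (\<Prod>l'\<in>S. (\<integral>\<^sup>+ a. ennreal (hh l l' a) \<partial>Mzeta)))"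
    unfolding S_def by (intro sum.cong refl arg_cong2[where f="(*)"] product_nn_integral_prod) auto
  also have "\<dots> \<le> (\<Sum>l\<in>S. ennreal (1 / real L) * 1)"
  proof (intro sum_mono mult_left_mono)
    fix l assume l: "l \<in> S"
    have "(\<Prod>l'\<in>S. (\<integral>\<^sup>+ a. ennreal (hh l l' a) \<partial>Mzeta)) = (\<Prod>l'\<in>S. if l' = l then (\<integral>\<^sup>+ a. ennreal (hh l l a) \<partial>Mzeta) else 1)"
      using rho_prob[OF z] by (intro prod.cong refl) (auto simp: hh_def)
    also have "\<dots> = (\<integral>\<^sup>+ a. ennreal (hh l l a) \<partial>Mzeta)"
      using l S by (simp add: prod.delta)
    also have "\<dots> \<le> (\<integral>\<^sup>+ a. ennreal (pj z a / mp z) \<partial>Mzeta)"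
    proof (intro nn_integral_mono ennreal_leI)
      fix a assume a: "a \<in> space Mzeta"
      have "rho z a * (pj z a / rho z a) \<le> pj z a"
        using rho_nn[OF z a] pj_nn[OF z a] by (cases "rho z a = 0") auto
      then show "hh l l a \<le> pj z a / mp z" unfolding hh_def using mp0 by (simp add: divide_right_mono)
    qed
    also have "\<dots> = (\<integral>\<^sup>+ a. ennreal (pj z a) * ennreal (1 / mp z) \<partial>Mzeta)"
      using mp0 by (intro nn_integral_cong) (simp add: ennreal_mult'' divide_inverse)
    also have "\<dots> = ennreal (mp z) * ennreal (1 / mp z)"
      using z by (subst nn_integral_multc) (auto simp: ipj)
    also have "\<dots> = 1" using mp0 by (simp add: ennreal_mult''[symmetric])
    finally show "(\<Prod>l'\<in>S. (\<integral>\<^sup>+ a. ennreal (hh l l' a) \<partial>Mzeta)) \<le> 1" .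
  qed simp
  also have "\<dots> = ennreal (real L * (1 / real L))"
    by (simp add: S_def ennreal_of_nat_eq_real_of_nat ennreal_mult''[symmetric])
  also have "\<dots> = 1" using L1 by simp
  finally show ?thesis by (simp add: S_def)
qed

lemma psi_bound:
  assumes z: "z \<in> space Mz"
  shows "(\<integral>\<^sup>+ a. \<integral>\<^sup>+ ps. ennreal (q z a * (\<Prod>k\<in>{1..K}. tau z (ps k)) / BB z a ps) \<partial>Pk \<partial>Mpsi) \<le> 1"
proof -
  interpret product_sigma_finite "\<lambda>_. Mpsi" using sf by (simp add: product_sigma_finite_def)
  define t where "t a = tau z a" for a
  define v where "v a = q z a / tau z a" for a
  have tm[measurable]: "t \<in> borel_measurable Mpsi" unfolding t_def using z by measurable
  have vm[measurable]: "v \<in> borel_measurable Mpsi" unfolding v_def using z by measurable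
  have tn: "a \<in> space Mpsi \<Longrightarrow> t a \<ge> 0" for a unfolding t_def using tau_nn[OF z] by simp
  have vn: "a \<in> space Mpsi \<Longrightarrow> v a \<ge> 0" for a unfolding v_def using tau_nn[OF z] q_nn[OF z] by simp
  have tv: "a \<in> space Mpsi \<Longrightarrow> t a * v a = q z a" for a
    unfolding t_def v_def using tau_supp[OF z] by (cases "tau z a = 0") auto
  define f where "f x = ennreal ((\<Prod>k\<in>{0..K}. t (x k)) * (v (x 0) / ((1 / real (K+1)) * (\<Sum>k\<in>{0..K}. v (x k)))))" for x
  have ins: "insert 0 {1..K} = {0..K}" by auto
  have fm: "f \<in> borel_measurable (PiM {0..K} (\<lambda>_. Mpsi))"
    unfolding f_def by measurable
  have "integral\<^sup>N (PiM (insert 0 {1..K}) (\<lambda>_. Mpsi)) f = (\<integral>\<^sup>+ y. \<integral>\<^sup>+ x. f (x(0 := y)) \<partial>Pk \<partial>Mpsi)"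
    by (rule product_nn_integral_insert_rev) (simp_all only: ins fm finite_atLeastAtMost, simp)
  also have "\<dots> = (\<integral>\<^sup>+ a. \<integral>\<^sup>+ ps. ennreal (q z a * (\<Prod>k\<in>{1..K}. tau z (ps k)) / BB z a ps) \<partial>Pk \<partial>Mpsi)"
  proof (intro nn_integral_cong)
    fix y x assume y: "y \<in> space Mpsi" and x: "x \<in> space Pk"
    have p: "(\<Prod>k\<in>{0..K}. t ((x(0 := y)) k)) = t y * (\<Prod>k\<in>{1..K}. t (x k))"
      unfolding ins[symmetric] by (subst prod.insert) (auto intro!: prod.cong)
    have s: "(\<Sum>k\<in>{0..K}. v ((x(0 := y)) k)) = v y + (\<Sum>k\<in>{1..K}. v (x k))"
      unfolding ins[symmetric] by (subst sum.insert) (auto intro!: sum.cong)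
    have "(\<Prod>k\<in>{0..K}. t ((x(0 := y)) k)) * (v ((x(0 := y)) 0) / ((1 / real (K+1)) * (\<Sum>k\<in>{0..K}. v ((x(0 := y)) k))))
        = (t y * v y) * (\<Prod>k\<in>{1..K}. t (x k)) / ((1 / real (K+1)) * (v y + (\<Sum>k\<in>{1..K}. v (x k))))"
      unfolding p s by simp
    also have "\<dots> = q z y * (\<Prod>k\<in>{1..K}. tau z (x k)) / BB z y x"
      unfolding tv[OF y] by (simp add: BB_def v_def t_def)
    finally show "f (x(0 := y)) = ennreal (q z y * (\<Prod>k\<in>{1..K}. tau z (x k)) / BB z y x)"
      unfolding f_def by simp
  qed
  finally have eq: "integral\<^sup>N (PiM {0..K} (\<lambda>_. Mpsi)) f = (\<integral>\<^sup>+ a. \<integral>\<^sup>+ ps. ennreal (q z a * (\<Prod>k\<in>{1..K}. tau z (ps k)) / BB z a ps) \<partial>Pk \<partial>Mpsi)"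
    unfolding ins .
  have "integral\<^sup>N (PiM {0..K} (\<lambda>_. Mpsi)) f \<le> 1"
    unfolding f_def
  proof (rule sym_bound[OF sf(2) tm vm])
    show "(\<integral>\<^sup>+ a. ennreal (t a) \<partial>Mpsi) = 1" unfolding t_def using tau_prob[OF z] by simp
  qed (auto simp: tn vn)
  then show ?thesis using eq by simp
qed

definition "Zf z zs = ennreal ((\<Prod>l\<in>{1..L}. rho z (zs l)) * (AA z zs / mp z))"
definition "Yf z a ps = ennreal (q z a * (\<Prod>k\<in>{1..K}. tau z (ps k)) / BB z a ps)"
definition "GG w = ennreal ((AA (fst (fst w)) (snd (snd w)) / mp (fst (fst w))) * (mq (fst (fst w)) / BB (fst (fst w)) (snd (fst w)) (fst (snd w))))"

lemma AA_meas[measurable]: "(\<lambda>w. AA (f w) (g w)) \<in> borel_measurable N" if [measurable]: "f \<in> N \<rightarrow>\<^sub>M Mz" "g \<in> N \<rightarrow>\<^sub>M Pl"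
  unfolding AA_def by measurable
lemma BB_meas[measurable]: "(\<lambda>w. BB (f w) (g w) (h w)) \<in> borel_measurable N" if [measurable]: "f \<in> N \<rightarrow>\<^sub>M Mz" "g \<in> N \<rightarrow>\<^sub>M Mpsi" "h \<in> N \<rightarrow>\<^sub>M Pk"
  unfolding BB_def by measurable

lemma GG_bound: "(\<integral>\<^sup>+ w. GG w \<partial>JJ) \<le> 1"
proof -
  interpret B: sigma_finite_measure "Pk \<Otimes>\<^sub>M Pl" by (rule sf_B)
  interpret Psi: sigma_finite_measure Mpsi by (rule sf(2))
  interpret Pk: sigma_finite_measure Pk by (rule sf_Pk)
  have GGm[measurable]: "GG \<in> borel_measurable PPr" unfolding GG_def by measurable
  have Yfm[measurable]: "(\<lambda>w. Yf (fst (fst w)) (snd (fst w)) (snd w)) \<in> borel_measurable ((Mz \<Otimes>\<^sub>M Mpsi) \<Otimes>\<^sub>M Pk)"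
    unfolding Yf_def by measurable
  have Zfm[measurable]: "z \<in> space Mz \<Longrightarrow> Zf z \<in> borel_measurable Pl" for z
    unfolding Zf_def by measurable
  have "(\<integral>\<^sup>+ w. GG w \<partial>JJ) = (\<integral>\<^sup>+ w. DD w * GG w \<partial>PPr)"
    unfolding JJ_eq by (rule nn_integral_density[OF DD_meas GGm])
  also have "\<dots> = (\<integral>\<^sup>+ w. ennreal (mq (fst (fst w))) * (Yf (fst (fst w)) (snd (fst w)) (fst (snd w)) * Zf (fst (fst w)) (snd (snd w))) \<partial>PPr)"
  proof (rule nn_integral_cong)
    fix w assume w: "w \<in> space PPr"
    obtain z a ps zs where wd: "w = ((z, a), (ps, zs))" by (metis prod.collapse)
    have z: "z \<in> space Mz" and a: "a \<in> space Mpsi" and ps: "\<And>k. k \<in> {1..K} \<Longrightarrow> ps k \<in> space Mpsi"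
      and zs: "\<And>l. l \<in> {1..L} \<Longrightarrow> zs l \<in> space Mzeta"
      using w by (auto simp: wd space_pair_measure space_PiM)
    have Tn: "(\<Prod>k\<in>{1..K}. tau z (ps k)) \<ge> 0" using ps tau_nn[OF z] by (auto intro!: prod_nonneg)
    have Rn: "(\<Prod>l\<in>{1..L}. rho z (zs l)) \<ge> 0" using zs rho_nn[OF z] by (auto intro!: prod_nonneg)
    have An: "AA z zs \<ge> 0" unfolding AA_def using zs rho_nn[OF z] pj_nn[OF z]
      by (auto intro!: sum_nonneg divide_nonneg_nonneg)
    have Bn: "BB z a ps \<ge> 0" unfolding BB_def using ps a tau_nn[OF z] q_nn[OF z]
      by (auto intro!: sum_nonneg divide_nonneg_nonneg add_nonneg_nonneg)
    have qn: "q z a \<ge> 0" using q_nn[OF z a] .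
    have "q z a * (\<Prod>k\<in>{1..K}. tau z (ps k)) * (\<Prod>l\<in>{1..L}. rho z (zs l)) * ((AA z zs / mp z) * (mq z / BB z a ps))
       = mq z * ((q z a * (\<Prod>k\<in>{1..K}. tau z (ps k)) / BB z a ps) * ((\<Prod>l\<in>{1..L}. rho z (zs l)) * (AA z zs / mp z)))"
      by (simp add: field_simps)
    then show "DD w * GG w = ennreal (mq (fst (fst w))) * (Yf (fst (fst w)) (snd (fst w)) (fst (snd w)) * Zf (fst (fst w)) (snd (snd w)))"
      unfolding wd DD_def GG_def Yf_def Zf_def using Tn Rn An Bn qn mq_nn[of z] mp_nn[of z]
      by (simp add: ennreal_mult[symmetric] mult_nonneg_nonneg divide_nonneg_nonneg)
  qed
  also have "\<dots> = (\<integral>\<^sup>+ x. \<integral>\<^sup>+ y. ennreal (mq (fst x)) * (Yf (fst x) (snd x) (fst y) * Zf (fst x) (snd y)) \<partial>(Pk \<Otimes>\<^sub>M Pl) \<partial>(Mz \<Otimes>\<^sub>M Mpsi))"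
  proof -
    have m: "(\<lambda>w. ennreal (mq (fst (fst w))) * (Yf (fst (fst w)) (snd (fst w)) (fst (snd w)) * Zf (fst (fst w)) (snd (snd w)))) \<in> borel_measurable PPr"
      unfolding Yf_def Zf_def by measurable
    show ?thesis using B.nn_integral_fst[OF m] by simp
  qed
  also have "\<dots> \<le> (\<integral>\<^sup>+ x. ennreal (mq (fst x)) * (\<integral>\<^sup>+ ps. Yf (fst x) (snd x) ps \<partial>Pk) \<partial>(Mz \<Otimes>\<^sub>M Mpsi))"
  proof (rule nn_integral_mono)
    fix x assume x: "x \<in> space (Mz \<Otimes>\<^sub>M Mpsi)"
    then have z: "fst x \<in> space Mz" and a: "snd x \<in> space Mpsi" by (auto simp: space_pair_measure)
    have ym[measurable]: "Yf (fst x) (snd x) \<in> borel_measurable Pk" unfolding Yf_def using z a by measurable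
    have zm[measurable]: "Zf (fst x) \<in> borel_measurable Pl" using Zfm[OF z] .
    have "(\<integral>\<^sup>+ y. ennreal (mq (fst x)) * (Yf (fst x) (snd x) (fst y) * Zf (fst x) (snd y)) \<partial>(Pk \<Otimes>\<^sub>M Pl))
        = ennreal (mq (fst x)) * (\<integral>\<^sup>+ y. Yf (fst x) (snd x) (fst y) * Zf (fst x) (snd y) \<partial>(Pk \<Otimes>\<^sub>M Pl))"
      by (intro nn_integral_cmult) measurable
    also have "(\<integral>\<^sup>+ y. Yf (fst x) (snd x) (fst y) * Zf (fst x) (snd y) \<partial>(Pk \<Otimes>\<^sub>M Pl))
        = (\<integral>\<^sup>+ ps. Yf (fst x) (snd x) ps \<partial>Pk) * (\<integral>\<^sup>+ zs. Zf (fst x) zs \<partial>Pl)"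
      by (rule nn_integral_pair_mult[OF sf_Pk sf_Pl ym Zfm[OF z]])
    also have "\<dots> \<le> (\<integral>\<^sup>+ ps. Yf (fst x) (snd x) ps \<partial>Pk) * 1"
      using zeta_bound[OF z] by (intro mult_left_mono) (auto simp: Zf_def)
    finally show "(\<integral>\<^sup>+ y. ennreal (mq (fst x)) * (Yf (fst x) (snd x) (fst y) * Zf (fst x) (snd y)) \<partial>(Pk \<Otimes>\<^sub>M Pl))
        \<le> ennreal (mq (fst x)) * (\<integral>\<^sup>+ ps. Yf (fst x) (snd x) ps \<partial>Pk)"
      by (simp add: mult_left_mono)
  qed
  also have "\<dots> = (\<integral>\<^sup>+ z. \<integral>\<^sup>+ a. ennreal (mq z) * (\<integral>\<^sup>+ ps. Yf z a ps \<partial>Pk) \<partial>Mpsi \<partial>Mz)"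
  proof -
    have m: "(\<lambda>x. ennreal (mq (fst x)) * (\<integral>\<^sup>+ ps. Yf (fst x) (snd x) ps \<partial>Pk)) \<in> borel_measurable (Mz \<Otimes>\<^sub>M Mpsi)"
      using Pk.borel_measurable_nn_integral_fst[OF Yfm] by measurable
    show ?thesis using Psi.nn_integral_fst[OF m] by simp
  qed
  also have "\<dots> = (\<integral>\<^sup>+ z. ennreal (mq z) * (\<integral>\<^sup>+ a. \<integral>\<^sup>+ ps. Yf z a ps \<partial>Pk \<partial>Mpsi) \<partial>Mz)"
  proof (rule nn_integral_cong)
    fix z assume z: "z \<in> space Mz"
    have "(\<lambda>a. \<integral>\<^sup>+ ps. Yf z a ps \<partial>Pk) \<in> borel_measurable Mpsi"
    proof -
      have "(\<lambda>(a, ps). Yf z a ps) \<in> borel_measurable (Mpsi \<Otimes>\<^sub>M Pk)" unfolding Yf_def using z by measurable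
      then show ?thesis by (rule Pk.borel_measurable_nn_integral)
    qed
    then show "(\<integral>\<^sup>+ a. ennreal (mq z) * (\<integral>\<^sup>+ ps. Yf z a ps \<partial>Pk) \<partial>Mpsi) = ennreal (mq z) * (\<integral>\<^sup>+ a. \<integral>\<^sup>+ ps. Yf z a ps \<partial>Pk \<partial>Mpsi)"
      by (rule nn_integral_cmult)
  qed
  also have "\<dots> \<le> (\<integral>\<^sup>+ z. ennreal (mq z) * 1 \<partial>Mz)"
    using psi_bound by (intro nn_integral_mono mult_left_mono) (auto simp: Yf_def)
  also have "\<dots> = 1" using mq_total by simp
  finally show ?thesis .
qed

lemma ratio_alg: "(l::real) \<noteq> 0 \<Longrightarrow> (l * A / B) / (l * m / n) = (A / m) * (n / B)"
  by (simp add: field_simps)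

lemma part2: "(\<integral> w. diw_integrand K L lik pj q tau rho w \<partial>JJ) \<le> (\<integral> z. elbo_integrand Mpsi Mzeta lik pj q z \<partial>Qz)"
proof -
  interpret J: prob_space JJ by (rule JJ_prob)
  let ?R = "diw_ratio K L lik pj q tau rho"
  have intR: "integrable JJ (\<lambda>w. ln (?R w))"
    using diw_int by (simp add: diw_integrand_def[abs_def])
  have intf: "integrable JJ (\<lambda>w. ln (ff (fst (fst w))))" by (rule ff_int_JJ)
  have inth: "integrable JJ (\<lambda>w. ln (?R w) - ln (ff (fst (fst w))) + 1)"
    using intR intf by auto
  have "(\<integral>\<^sup>+ w. ennreal (ln (?R w) - ln (ff (fst (fst w))) + 1) \<partial>JJ) \<le> (\<integral>\<^sup>+ w. GG w \<partial>JJ)"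
  proof (rule nn_integral_mono_AE)
    show "AE w in JJ. ennreal (ln (?R w) - ln (ff (fst (fst w))) + 1) \<le> GG w"
      using diw_pos ff_pos_JJ
    proof eventually_elim
      case (elim w)
      obtain z a ps zs where wd: "w = ((z, a), (ps, zs))" by (metis prod.collapse)
      have Rp: "?R w > 0" and fp: "ff z > 0" using elim by (auto simp: wd)
      then have l0: "lik z \<noteq> 0" by (auto simp: ff_def)
      have Rw: "?R w = lik z * AA z zs / BB z a ps"
        by (simp add: wd diw_ratio_def AA_def BB_def)
      have rat: "?R w / ff z = (AA z zs / mp z) * (mq z / BB z a ps)"
        unfolding Rw ff_def by (rule ratio_alg[OF l0])
      have "ln (?R w) - ln (ff z) = ln (?R w / ff z)" using Rp fp by (simp add: ln_div)
      also have "\<dots> \<le> ?R w / ff z - 1" using Rp fp by (intro ln_le_minus_one) simp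
      finally have "ln (?R w) - ln (ff z) + 1 \<le> (AA z zs / mp z) * (mq z / BB z a ps)" using rat by simp
      then show ?case by (simp add: wd GG_def ennreal_leI)
    qed
  qed
  also have "\<dots> \<le> 1" by (rule GG_bound)
  finally have "(\<integral> w. ln (?R w) - ln (ff (fst (fst w))) + 1 \<partial>JJ) \<le> 1"
    by (intro integral_real_bounded) auto
  moreover have "(\<integral> w. ln (?R w) - ln (ff (fst (fst w))) + 1 \<partial>JJ) = (\<integral> w. ln (?R w) \<partial>JJ) - (\<integral> w. ln (ff (fst (fst w))) \<partial>JJ) + 1"
    using intR intf by (simp add: J.prob_space)
  ultimately show ?thesis
    by (simp add: ff_integral_JJ elbo_ff diw_integrand_def[abs_def])
qed

end

theorem mainTheorem5:
  fixes Mz :: "'z measure" and Mpsi :: "'b measure" and Mzeta :: "'c measure"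
    and K L :: nat
    and lik :: "'z \<Rightarrow> real" and pj :: "'z \<Rightarrow> 'c \<Rightarrow> real"
    and q tau :: "'z \<Rightarrow> 'b \<Rightarrow> real" and rho :: "'z \<Rightarrow> 'c \<Rightarrow> real"
  assumes sf: "sigma_finite_measure Mz" "sigma_finite_measure Mpsi" "sigma_finite_measure Mzeta"
    and L1: "L \<ge> 1"
    and lik_meas: "lik \<in> borel_measurable Mz" and lik_nn: "\<And>z. z \<in> space Mz \<Longrightarrow> lik z \<ge> 0"
    and pj_meas: "(\<lambda>(z, zeta). pj z zeta) \<in> borel_measurable (Mz \<Otimes>\<^sub>M Mzeta)"
    and pj_nn: "\<And>z zeta. z \<in> space Mz \<Longrightarrow> zeta \<in> space Mzeta \<Longrightarrow> pj z zeta \<ge> 0"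
    and q_meas: "(\<lambda>(z, psi). q z psi) \<in> borel_measurable (Mz \<Otimes>\<^sub>M Mpsi)"
    and q_nn: "\<And>z psi. z \<in> space Mz \<Longrightarrow> psi \<in> space Mpsi \<Longrightarrow> q z psi \<ge> 0"
    and q_prob: "(\<integral>\<^sup>+ w. ennreal (case w of (z, psi) \<Rightarrow> q z psi) \<partial>(Mz \<Otimes>\<^sub>M Mpsi)) = 1"
    and tau_meas: "(\<lambda>(z, psi). tau z psi) \<in> borel_measurable (Mz \<Otimes>\<^sub>M Mpsi)"
    and tau_nn: "\<And>z psi. z \<in> space Mz \<Longrightarrow> psi \<in> space Mpsi \<Longrightarrow> tau z psi \<ge> 0"
    and tau_prob: "\<And>z. z \<in> space Mz \<Longrightarrow> (\<integral>\<^sup>+ psi. ennreal (tau z psi) \<partial>Mpsi) = 1"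
    and tau_supp: "\<And>z psi. z \<in> space Mz \<Longrightarrow> psi \<in> space Mpsi \<Longrightarrow> tau z psi = 0 \<Longrightarrow> q z psi = 0"
    and rho_meas: "(\<lambda>(z, zeta). rho z zeta) \<in> borel_measurable (Mz \<Otimes>\<^sub>M Mzeta)"
    and rho_nn: "\<And>z zeta. z \<in> space Mz \<Longrightarrow> zeta \<in> space Mzeta \<Longrightarrow> rho z zeta \<ge> 0"
    and rho_prob: "\<And>z. z \<in> space Mz \<Longrightarrow> (\<integral>\<^sup>+ zeta. ennreal (rho z zeta) \<partial>Mzeta) = 1"
    and px_fin: "evidence Mz Mzeta lik pj < \<infinity>"
    and elbo_pos: "AE z in qz_measure Mz Mpsi q. lik z * marg Mzeta pj z / marg Mpsi q z > 0"
    and elbo_int: "integrable (qz_measure Mz Mpsi q) (elbo_integrand Mpsi Mzeta lik pj q)"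
    and diw_pos: "AE w in joint_measure Mz Mpsi Mzeta K L q tau rho. diw_ratio K L lik pj q tau rho w > 0"
    and diw_int: "integrable (joint_measure Mz Mpsi Mzeta K L q tau rho) (diw_integrand K L lik pj q tau rho)"
  shows "ln (enn2real (evidence Mz Mzeta lik pj))
           \<ge> (\<integral> z. elbo_integrand Mpsi Mzeta lik pj q z \<partial>qz_measure Mz Mpsi q)
         \<and> (\<integral> z. elbo_integrand Mpsi Mzeta lik pj q z \<partial>qz_measure Mz Mpsi q)
           \<ge> (\<integral> w. diw_integrand K L lik pj q tau rho w \<partial>joint_measure Mz Mpsi Mzeta K L q tau rho)"
proof -
  interpret D: dsetup Mz Mpsi Mzeta K L lik pj q tau rho
    by (rule dsetup.intro) (fact assms)+
  show ?thesis using D.part1 D.part2 by simp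
qed

end
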